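(* Let $p,q$ be positive integers with $1<q<p-q$ and $\gcd(p,q)=1$, let $A=\langle q,p-q\rangle$, let $s\in A\setminus\{0\}$, and let $r$ be a positive integer with $1<r<s-r$ and $\gcd(r,s)=1$; put $B=\langle r,s-r\rangle$. Let $M$ be the submonoid of $\mathbb{Q}^+$ generated by all $k/r$ with $k\in A$ and all $\frac{k'}{r}(s/r)^n$ with $k'\in B$, $n\ge1$, and let $(G,G^+)=(M+(-M),M)$. Let $D=\{x\in G^+: x\le_G (s/r)^n \text{ for some } n\ge1\}$. Then $tD\neq G^+$ for every positive integer $t\le r-1$, and $rD=G^+$.
   Context: $\langle a_1,\dots,a_k\rangle$ is the submonoid of $\mathbb{Z}^+$ generated by the $a_i$. $x\le_G y$ means $y-x\in G^+$. An interval in $G^+$ is a nonempty, upward directed, order-hereditary subset of $G^+$. For intervals $X,Y$, $X+Y=\{z\in G^+: z\le x+y,\ x\in X,\ y\in Y\}$; $tX$ is the $t$-fold sum of $X$ with itself. *)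

theory Defs
  imports Complex_Main
begin

inductive_set gen_monoid :: "'a::monoid_add set \<Rightarrow> 'a set" for S where
  zero: "0 \<in> gen_monoid S"
| gen: "x \<in> S \<Longrightarrow> x \<in> gen_monoid S"
| add: "x \<in> gen_monoid S \<Longrightarrow> y \<in> gen_monoid S \<Longrightarrow> x + y \<in> gen_monoid S"

definition leG :: "'a::ab_group_add set \<Rightarrow> 'a \<Rightarrow> 'a \<Rightarrow> bool" where
  "leG P x y \<longleftrightarrow> y - x \<in> P"

text \<open>Sum of intervals X, Y in the positive cone P.\<close>
definition int_sum :: "'a::ab_group_add set \<Rightarrow> 'a set \<Rightarrow> 'a set \<Rightarrow> 'a set" where
  "int_sum P X Y = {z \<in> P. \<exists>x\<in>X. \<exists>y\<in>Y. leG P z (x + y)}"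

text \<open>t-fold sum tX (meaningful for t \<ge> 1; the case t = 0 is never used).\<close>
fun int_mult :: "'a::ab_group_add set \<Rightarrow> nat \<Rightarrow> 'a set \<Rightarrow> 'a set" where
  "int_mult P 0 X = {0}"
| "int_mult P (Suc 0) X = X"
| "int_mult P (Suc (Suc n)) X = int_sum P (int_mult P (Suc n) X) X"

end

theory Submission
  imports Defs
begin

lemma gm_mult: "x \<in> gen_monoid S \<Longrightarrow> of_nat k * x \<in> gen_monoid (S::'a::semiring_1 set)"
  by (induction k) (auto simp: distrib_right intro: gen_monoid.add gen_monoid.zero)

lemma gm_nat_mult: "(x::nat) \<in> gen_monoid S \<Longrightarrow> k * x \<in> gen_monoid S"
  using gm_mult[of x S k] by simp

lemma gm2_char: "x \<in> gen_monoid {a, b::nat} \<Longrightarrow> \<exists>i j. x = i*a + j*b"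
proof (induction rule: gen_monoid.induct)
  case zero then show ?case by auto
next
  case (gen x) then show ?case by (metis empty_iff insert_iff mult_1 mult_zero_left add_0 add_0_right)
next
  case (add x y)
  then obtain i j i' j' where "x = i*a+j*b" "y = i'*a+j'*b" by blast
  then have "x + y = (i+i')*a + (j+j')*b" by (simp add: algebra_simps)
  then show ?case by blast
qed

lemma gm2_mem: "i*a + j*b \<in> gen_monoid {a, b::nat}"
  by (intro gen_monoid.add gm_nat_mult gen_monoid.gen) auto

lemma B3:
  assumes "b \<in> gen_monoid {r, s - r}" "r dvd b" "coprime r s" "r \<le> (s::nat)" "r > 0"
  shows "(b div r) * s \<in> gen_monoid {r, s - r}"
proof -
  obtain i j where b: "b = i*r + j*(s-r)" using gm2_char[OF assms(1)] by blast
  have "gcd (s - r) r = 1" using gcd_diff1_nat[of r s] assms(3,4) by (simp add: gcd.commute)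
  then have cop: "coprime r (s - r)" by (simp add: coprime_iff_gcd_eq_1 gcd.commute)
  have "r dvd j*(s-r)" using assms(2) b by (simp add: dvd_add_right_iff)
  then have "r dvd j" using cop by (simp add: coprime_dvd_mult_left_iff)
  then obtain j' where j: "j = r*j'" by blast
  have "r > 0" using assms(5) .
  then have "b div r = i + j'*(s-r)" using b j by simp
  moreover obtain w where w: "s = r + w" using assms(4) le_Suc_ex by blast
  ultimately have "(b div r) * s = i*r + (i + j'*s)*(s-r)" by (simp add: algebra_simps)
  then show ?thesis using gm2_mem by metis
qed

lemma pow_scale:
  fixes r s :: nat
  assumes "r > 0" "k \<le> m"
  shows "(of_nat s / of_nat r :: rat)^k * of_nat r ^ m = of_nat (s^k * r^(m-k))"
proof -
  obtain j where m: "m = k + j" using assms(2) le_Suc_ex by blast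
  have "(of_nat s / of_nat r :: rat)^k * of_nat r ^ k = of_nat s ^ k"
    using assms(1) by (simp add: power_divide)
  then show ?thesis using m by (simp add: power_add mult.assoc[symmetric])
qed

lemma sum_scale:
  fixes r s :: nat
  assumes "r > 0"
  shows "(\<Sum>k<L. of_nat (d k) * (of_nat s / of_nat r :: rat)^k) * of_nat r ^ (L - 1)
       = of_nat (\<Sum>k<L. d k * (s^k * r^(L-1-k)))"
proof -
  have "(\<Sum>k<L. of_nat (d k) * (of_nat s / of_nat r :: rat)^k) * of_nat r ^ (L - 1)
      = (\<Sum>k<L. of_nat (d k) * ((of_nat s / of_nat r :: rat)^k * of_nat r ^ (L - 1)))"
    by (simp add: sum_distrib_right mult.assoc)
  also have "\<dots> = (\<Sum>k<L. of_nat (d k) * of_nat (s^k * r^(L-1-k)))"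
    by (intro sum.cong refl) (simp add: pow_scale[OF assms])
  also have "\<dots> = of_nat (\<Sum>k<L. d k * (s^k * r^(L-1-k)))" by simp
  finally show ?thesis .
qed

lemma div_dvd:
  assumes "(of_int a :: rat) / of_nat r = of_int b" "r > 0"
  shows "int r dvd a"
proof -
  have "(of_int a :: rat) = of_int (b * int r)" using assms by (simp add: field_simps)
  then have "a = b * int r" by (simp only: of_int_eq_iff)
  then show ?thesis by simp
qed


lemma descent:
  fixes r s :: nat and d :: "nat \<Rightarrow> nat" and t :: int
  assumes r1: "1 < r" and rs: "r < s - r" and cop: "coprime r s"
    and n1: "1 \<le> n" and dB: "\<forall>k\<ge>1. d k \<in> gen_monoid {r, s - r}" and tr: "t < int r"
  shows "(\<Sum>k<N. of_nat (d k) * (of_nat s / of_nat r :: rat)^k) \<noteq>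
     of_nat r * of_int t * (of_nat s / of_nat r)^n - of_nat r * of_nat s"
  using n1 dB tr
proof (induction "max N n" arbitrary: d N n t rule: less_induct)
  case less
  define u where "u = (of_nat s / of_nat r :: rat)"
  have r0: "r > 0" using r1 by simp
  have sr: "r < s" using rs by simp
  have u_step: "\<And>k. of_nat r * u^(Suc k) = of_nat s * u^k" using r0 by (simp add: u_def)
  have u0: "u \<ge> 0" by (simp add: u_def)
  show ?case
  proof
    assume eq: "(\<Sum>k<N. of_nat (d k) * (of_nat s / of_nat r :: rat)^k) = of_nat r * of_int t * (of_nat s / of_nat r)^n - of_nat r * of_nat s"
    then have eq': "(\<Sum>k<N. of_nat (d k) * u^k) = of_nat r * of_int t * u^n - of_nat r * of_nat s"
      by (simp add: u_def)
    have lhs0: "(\<Sum>k<N. of_nat (d k) * u^k) \<ge> 0" using u0 by (intro sum_nonneg) simp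
    show False
    proof (cases "t \<le> 0")
      case True
      have "of_nat r * of_int t \<le> (0::rat)" using True by (simp add: mult_nonneg_nonpos)
      then have "of_nat r * of_int t * u^n \<le> 0" using u0 by (simp add: mult_nonpos_nonneg)
      moreover have "of_nat r * of_nat s > (0::rat)" using r0 sr by simp
      ultimately show False using eq' lhs0 by linarith
    next
      case False
      then have t1: "t \<ge> 1" by simp
      consider (A) "n < N" | (B) "N \<le> n" by linarith
      then show False
      proof cases
        case A
        then obtain L where NL: "N = Suc L" by (cases N) auto
        have Ln: "n \<le> L" using A NL by simp
        have L1: "L \<ge> 1" using Ln less.prems(1) by simp
        have eq2: "(\<Sum>k<L. of_nat (d k) * u^k) + of_nat (d L) * u^L = of_nat r * of_int t * u^n - of_nat r * of_nat s"
          using eq' NL by simp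
        have rL: "(of_nat r :: rat) ^ L = of_nat r ^ (L - 1) * of_nat r" using L1
          by (metis Suc_diff_1 less_le_trans power_Suc2 zero_less_one)
        have I: "(\<Sum>k<L. of_nat (d k) * u^k) * of_nat r ^ (L - 1) = of_nat (\<Sum>k<L. d k * (s^k * r^(L-1-k)))"
          using sum_scale[OF r0] unfolding u_def by blast
        have T2: "of_nat (d L) * u^L * of_nat r ^ (L - 1) = of_int (int (d L * s^L)) / of_nat r"
        proof -
          have "u^L * of_nat r ^ L = of_nat (s^L)" using pow_scale[OF r0, of L L s] by (simp add: u_def)
          then show ?thesis using r0 rL by (simp add: field_simps)
        qed
        have T3: "(of_nat r * of_int t * u^n - of_nat r * of_nat s) * of_nat r ^ (L - 1)
            = of_int (t * int (s^n * r^(L-n)) - int (s * r^L))"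
        proof -
          have "u^n * of_nat r ^ L = of_nat (s^n * r^(L-n))" using pow_scale[OF r0 Ln, of s] by (simp add: u_def)
          then show ?thesis using rL by (simp add: algebra_simps)
        qed
        have "((\<Sum>k<L. of_nat (d k) * u^k) + of_nat (d L) * u^L) * of_nat r ^ (L - 1) = (of_nat r * of_int t * u^n - of_nat r * of_nat s) * of_nat r ^ (L - 1)"
          using eq2 by simp
        then have "of_nat (\<Sum>k<L. d k * (s^k * r^(L-1-k))) + of_int (int (d L * s^L)) / of_nat r = (of_int (t * int (s^n * r^(L-n)) - int (s * r^L)) :: rat)"
          by (simp only: distrib_right I T2 T3)
        then have "of_int (int (d L * s^L)) / of_nat r = (of_int (t * int (s^n * r^(L-n)) - int (s * r^L) - int (\<Sum>k<L. d k * (s^k * r^(L-1-k)))) :: rat)"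
          by (simp add: of_int_diff; linarith)
        from div_dvd[OF this r0] have "r dvd d L * s^L" using int_dvd_int_iff by blast
        moreover have "coprime r (s^L)" using cop by simp
        ultimately have rdL: "r dvd d L" using coprime_dvd_mult_left_iff by blast
        define e where "e = d L div r"
        have dLe: "d L = e * r" using rdL by (simp add: e_def)
        have es: "e * s \<in> gen_monoid {r, s - r}" unfolding e_def
          using B3[of "d L" r s] less.prems(2) L1 rdL cop sr r0 by simp
        obtain L' where LL': "L = Suc L'" using L1 by (cases L) auto
        define d' where "d' = d(L' := d L' + e * s)"
        have sum': "(\<Sum>k<L. of_nat (d' k) * u^k) = (\<Sum>k<N. of_nat (d k) * u^k)"
        proof -
          have "(\<Sum>k<L. of_nat (d' k) * u^k) = (\<Sum>k<L'. of_nat (d k) * u^k) + of_nat (d L' + e * s) * u^L'"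
            using LL' by (simp add: d'_def)
          moreover have "(\<Sum>k<N. of_nat (d k) * u^k) = (\<Sum>k<L'. of_nat (d k) * u^k) + of_nat (d L') * u^L' + of_nat (e * r) * u^(Suc L')"
            using NL LL' dLe by simp
          moreover have h: "of_nat (e * r) * u^(Suc L') = of_nat (e * s) * u^L'"
            using u_step[of L'] by (simp add: algebra_simps)
          ultimately show ?thesis by (simp only: of_nat_add distrib_right add.assoc h)
        qed
        have d'B: "\<forall>k\<ge>1. d' k \<in> gen_monoid {r, s - r}"
          using less.prems(2) es by (auto simp: d'_def intro: gen_monoid.add)
        have "max L n < max N n" using NL Ln by simp
        from less.hyps[OF this less.prems(1) d'B less.prems(3)] sum' eq'
        show False by (simp add: u_def)
      next
        case B
        show False
        proof (cases "n = 1")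
          case True
          have "of_nat r * of_int t * u^n = of_int t * (of_nat s :: rat)" using True r0 by (simp add: u_def)
          moreover have "of_int t * (of_nat s :: rat) < of_nat r * of_nat s"
            using less.prems(3) sr by simp
          ultimately show False using eq' lhs0 by linarith
        next
          case False
          then have "n \<ge> 2" using less.prems(1) by simp
          then obtain L where nL: "n = Suc L" and L1: "L \<ge> 1" by (cases n) auto
          define d' where "d' = (\<lambda>k. if k < N then d k else 0)"
          have pad: "(\<Sum>k<n. of_nat (d' k) * u^k) = (\<Sum>k<N. of_nat (d k) * u^k)"
            by (rule sum.mono_neutral_cong_right) (use B in \<open>auto simp: d'_def\<close>)
          have eq2: "(\<Sum>k<L. of_nat (d' k) * u^k) + of_nat (d' L) * u^L = of_nat r * of_int t * u^n - of_nat r * of_nat s"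
            using eq' pad nL by simp
          have d'B: "\<forall>k\<ge>1. d' k \<in> gen_monoid {r, s - r}"
            using less.prems(2) by (auto simp: d'_def intro: gen_monoid.zero)
          have rL: "(of_nat r :: rat) ^ L = of_nat r ^ (L - 1) * of_nat r" using L1
            by (metis Suc_diff_1 less_le_trans power_Suc2 zero_less_one)
          have I: "(\<Sum>k<L. of_nat (d' k) * u^k) * of_nat r ^ (L - 1) = of_nat (\<Sum>k<L. d' k * (s^k * r^(L-1-k)))"
            using sum_scale[OF r0] unfolding u_def by blast
          have uL: "u^L * of_nat r ^ L = of_nat (s^L)" using pow_scale[OF r0, of L L s] by (simp add: u_def)
          have un: "u^n * of_nat r ^ n = of_nat (s^n)" using pow_scale[OF r0, of n n s] by (simp add: u_def)
          have T2: "of_nat (d' L) * u^L * of_nat r ^ (L - 1) = of_int (int (d' L * s^L)) / of_nat r"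
            using r0 rL uL by (simp add: field_simps)
          have T3: "(of_nat r * of_int t * u^n - of_nat r * of_nat s) * of_nat r ^ (L - 1)
              = of_int (t * int (s^n)) / of_nat r - of_int (int (s * r^L))"
            using r0 rL un nL by (simp add: field_simps)
          have "((\<Sum>k<L. of_nat (d' k) * u^k) + of_nat (d' L) * u^L) * of_nat r ^ (L - 1) = (of_nat r * of_int t * u^n - of_nat r * of_nat s) * of_nat r ^ (L - 1)"
            using eq2 by simp
          then have "of_nat (\<Sum>k<L. d' k * (s^k * r^(L-1-k))) + of_int (int (d' L * s^L)) / of_nat r = of_int (t * int (s^n)) / of_nat r - (of_int (int (s * r^L)) :: rat)"
            by (simp only: distrib_right I T2 T3)
          then have "of_int (int (d' L * s^L) - t * int (s^n)) / of_nat r = (of_int (- int (s * r^L) - int (\<Sum>k<L. d' k * (s^k * r^(L-1-k)))) :: rat)"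
            by (simp add: of_int_diff diff_divide_distrib; linarith)
          from div_dvd[OF this r0] have "int r dvd (int (d' L) - t * int s) * int s ^ L"
            using nL by (simp add: algebra_simps)
          moreover have "coprime (int r) (int s ^ L)" using cop by simp
          ultimately have dv1: "int r dvd int (d' L) - t * int s" using coprime_dvd_mult_left_iff by blast
          obtain i j where ij: "d' L = i * r + j * (s - r)" using gm2_char d'B L1 by blast
          have sr': "int (s - r) = int s - int r" using sr by simp
          have "int (d' L) = int i * int r + int j * int (s - r)" using ij by simp
          then have "int (d' L) - t * int s = int r * (int i - int j) + (int j - t) * int s"
            unfolding sr' by (simp add: algebra_simps)
          then have "int r dvd (int j - t) * int s" using dv1
            by (metis dvd_add_right_iff dvd_triv_left)
          moreover have "coprime (int r) (int s)" using cop by simp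
          ultimately have "int r dvd int j - t" using coprime_dvd_mult_left_iff by blast
          then obtain m where m: "int j - t = int r * m" by blast
          have m0: "m \<ge> 0"
          proof (rule ccontr)
            assume "\<not> m \<ge> 0"
            then have "m \<le> -1" by simp
            then have "int r * m \<le> - int r" using r0 by (simp add: mult_left_mono[of m "-1" "int r", simplified])
            then show False using m less.prems(3) by simp
          qed
          define t' where "t' = t - int i - m * int (s - r)"
          have "m * int (s - r) \<ge> 0" using m0 by simp
          then have t'r: "t' < int r" using less.prems(3) unfolding t'_def by simp
          have "int (d' L) = int i * int r + (t + int r * m) * (int s - int r)"
            using \<open>int (d' L) = int i * int r + int j * int (s - r)\<close> m sr' by (simp add: algebra_simps)
          then have "(of_int (int (d' L)) :: rat) = of_int (int i * int r + (t + int r * m) * (int s - int r))"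
            by simp
          then have dL: "(of_nat (d' L) :: rat) = of_nat i * of_nat r + (of_int t + of_nat r * of_int m) * (of_nat s - of_nat r)"
            by simp
          have A1: "of_nat r * of_int t * u^n = of_int t * (of_nat s * u^L)" using u_step[of L] nL by (simp add: algebra_simps)
          have A2: "(of_int t' :: rat) = of_int t - of_nat i - of_int m * (of_nat s - of_nat r)"
            using sr by (simp add: t'_def of_nat_diff)
          have "(\<Sum>k<L. of_nat (d' k) * u^k) = of_nat r * of_int t * u^n - of_nat r * of_nat s - of_nat (d' L) * u^L"
            using eq2 by (simp add: algebra_simps)
          also have "\<dots> = of_nat r * of_int t' * u^L - of_nat r * of_nat s"
            unfolding A1 dL A2 by (simp add: algebra_simps)
          finally have eq3: "(\<Sum>k<L. of_nat (d' k) * u^k) = of_nat r * of_int t' * u^L - of_nat r * of_nat s" .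
          have "max L L < max N n" using nL by simp
          from less.hyps[OF this L1 d'B t'r] eq3
          show False by (simp add: u_def)
        qed
      qed
    qed
  qed
qed


lemma rep:
  fixes r s :: nat and A B :: "nat set"
  assumes "x \<in> gen_monoid ({of_nat k / of_nat r | k. k \<in> A} \<union>
       {of_nat k' / of_nat r * (of_nat s / of_nat r) ^ n | k' n. k' \<in> B \<and> n \<ge> 1} :: rat set)"
    and r0: "r > 0" and B0: "0 \<in> B" and Badd: "\<And>x y. x \<in> B \<Longrightarrow> y \<in> B \<Longrightarrow> x + y \<in> B"
  shows "\<exists>d N. (\<forall>k\<ge>1. d k \<in> B) \<and> (\<forall>k\<ge>N. d k = 0) \<and>
           of_nat r * x = (\<Sum>k<N. of_nat (d k) * (of_nat s / of_nat r :: rat)^k)"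
  using assms(1)
proof induction
  case zero
  show ?case by (rule exI[of _ "\<lambda>_. 0"], rule exI[of _ 0]) (simp add: B0)
next
  case (gen x)
  then show ?case
  proof
    assume "x \<in> {of_nat k / of_nat r | k. k \<in> A}"
    then obtain k where x: "x = of_nat k / of_nat r" by blast
    show ?case
      by (rule exI[of _ "\<lambda>i. if i = 0 then k else 0"], rule exI[of _ 1]) (use r0 B0 x in auto)
  next
    assume "x \<in> {of_nat k' / of_nat r * (of_nat s / of_nat r) ^ n | k' n. k' \<in> B \<and> n \<ge> 1}"
    then obtain k' n where x: "x = of_nat k' / of_nat r * (of_nat s / of_nat r) ^ n" and k': "k' \<in> B" "n \<ge> 1" by blast
    have "(\<Sum>i<Suc n. of_nat (if i = n then k' else 0) * (of_nat s / of_nat r :: rat)^i) = of_nat k' * (of_nat s / of_nat r :: rat)^n"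
      by (simp add: sum.If_cases)
    then show ?case
      by (intro exI[of _ "\<lambda>i. if i = n then k' else 0"] exI[of _ "Suc n"]) (use r0 B0 x k' in auto)
  qed
next
  case (add x y)
  from add.IH obtain d1 N1 d2 N2 where
    h1: "\<forall>k\<ge>1. d1 k \<in> B" "\<forall>k\<ge>N1. d1 k = 0" "of_nat r * x = (\<Sum>k<N1. of_nat (d1 k) * (of_nat s / of_nat r :: rat)^k)"
    and h2: "\<forall>k\<ge>1. d2 k \<in> B" "\<forall>k\<ge>N2. d2 k = 0" "of_nat r * y = (\<Sum>k<N2. of_nat (d2 k) * (of_nat s / of_nat r :: rat)^k)"
    by blast
  have e1: "(\<Sum>k<max N1 N2. of_nat (d1 k) * (of_nat s / of_nat r :: rat)^k) = (\<Sum>k<N1. of_nat (d1 k) * (of_nat s / of_nat r :: rat)^k)"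
    by (rule sum.mono_neutral_right) (use h1 in auto)
  have e2: "(\<Sum>k<max N1 N2. of_nat (d2 k) * (of_nat s / of_nat r :: rat)^k) = (\<Sum>k<N2. of_nat (d2 k) * (of_nat s / of_nat r :: rat)^k)"
    by (rule sum.mono_neutral_right) (use h2 in auto)
  have "of_nat r * (x + y) = (\<Sum>k<max N1 N2. of_nat (d1 k + d2 k) * (of_nat s / of_nat r :: rat)^k)"
    using e1 e2 h1(3) h2(3) by (simp add: distrib_left distrib_right sum.distrib)
  moreover have "\<forall>k\<ge>1. d1 k + d2 k \<in> B" using h1 h2 Badd by auto
  moreover have "\<forall>k\<ge>max N1 N2. d1 k + d2 k = 0" using h1 h2 by auto
  ultimately show ?case
    by (intro exI[of _ "\<lambda>k. d1 k + d2 k"] exI[of _ "max N1 N2"]) auto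
qed

lemma intI:
  fixes M D :: "rat set" and u :: "nat \<Rightarrow> rat"
  assumes uM: "\<And>n. n \<ge> 1 \<Longrightarrow> u n \<in> M"
    and umono: "\<And>n m. 1 \<le> n \<Longrightarrow> n \<le> m \<Longrightarrow> u m - u n \<in> M"
    and M0: "0 \<in> M" and Madd: "\<And>x y. x \<in> M \<Longrightarrow> y \<in> M \<Longrightarrow> x + y \<in> M"
    and Mmult: "\<And>k x. x \<in> M \<Longrightarrow> of_nat k * x \<in> M"
    and D: "D = {x \<in> M. \<exists>n\<ge>1. leG M x (u n)}"
  shows "int_mult M (Suc m) D = {z \<in> M. \<exists>n\<ge>1. of_nat (Suc m) * u n - z \<in> M}"
proof (induction m)
  case 0
  then show ?case by (simp add: D leG_def)
next
  case (Suc m)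
  have "int_mult M (Suc (Suc m)) D = int_sum M (int_mult M (Suc m) D) D" by simp
  also have "\<dots> = {z \<in> M. \<exists>n\<ge>1. of_nat (Suc (Suc m)) * u n - z \<in> M}"
  proof
    show "int_sum M (int_mult M (Suc m) D) D \<subseteq> {z \<in> M. \<exists>n\<ge>1. of_nat (Suc (Suc m)) * u n - z \<in> M}"
    proof
      fix z assume "z \<in> int_sum M (int_mult M (Suc m) D) D"
      then obtain x y where z: "z \<in> M" and x: "x \<in> int_mult M (Suc m) D" and y: "y \<in> D" and xyz: "x + y - z \<in> M"
        by (auto simp: int_sum_def leG_def)
      from x Suc obtain n1 where n1: "n1 \<ge> 1" "of_nat (Suc m) * u n1 - x \<in> M" by auto
      from y D obtain n2 where n2: "n2 \<ge> 1" "u n2 - y \<in> M" by (auto simp: leG_def)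
      define n where "n = max n1 n2"
      have "u n - u n1 \<in> M" using umono n1 unfolding n_def by simp
      then have a1: "of_nat (Suc m) * (u n - u n1) \<in> M" by (rule Mmult)
      have a2: "u n - u n2 \<in> M" using umono n2 unfolding n_def by simp
      have "of_nat (Suc m) * (u n - u n1) + (of_nat (Suc m) * u n1 - x) + (u n - u n2) + (u n2 - y) + (x + y - z) \<in> M"
        using a1 a2 n1(2) n2(2) xyz by (meson Madd)
      moreover have "of_nat (Suc m) * (u n - u n1) + (of_nat (Suc m) * u n1 - x) + (u n - u n2) + (u n2 - y) + (x + y - z)
          = of_nat (Suc (Suc m)) * u n - z" by (simp add: algebra_simps)
      ultimately have "of_nat (Suc (Suc m)) * u n - z \<in> M" by metis
      moreover have "n \<ge> 1" using n1 unfolding n_def by simp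
      ultimately show "z \<in> {z \<in> M. \<exists>n\<ge>1. of_nat (Suc (Suc m)) * u n - z \<in> M}" using z by blast
    qed
  next
    show "{z \<in> M. \<exists>n\<ge>1. of_nat (Suc (Suc m)) * u n - z \<in> M} \<subseteq> int_sum M (int_mult M (Suc m) D) D"
    proof
      fix z assume "z \<in> {z \<in> M. \<exists>n\<ge>1. of_nat (Suc (Suc m)) * u n - z \<in> M}"
      then obtain n where z: "z \<in> M" and n: "n \<ge> 1" "of_nat (Suc (Suc m)) * u n - z \<in> M" by blast
      have "of_nat (Suc m) * u n \<in> M" using Mmult uM n(1) by blast
      then have x: "of_nat (Suc m) * u n \<in> int_mult M (Suc m) D"
        using Suc n M0 by auto
      have y: "u n \<in> D" using D uM n M0 by (auto simp: leG_def)
      have "of_nat (Suc m) * u n + u n - z = of_nat (Suc (Suc m)) * u n - z" by (simp add: algebra_simps)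
      then show "z \<in> int_sum M (int_mult M (Suc m) D) D"
        using x y z n unfolding int_sum_def leG_def by force
    qed
  qed
  finally show ?case .
qed


theorem proposition2p3:
  fixes p q r s :: nat
  assumes "1 < q" and "q < p - q" and "gcd p q = 1"
    and "s \<in> gen_monoid {q, p - q}" and "s \<noteq> 0"
    and "1 < r" and "r < s - r" and "gcd r s = 1"
  defines "A \<equiv> gen_monoid {q, p - q}"
    and "B \<equiv> gen_monoid {r, s - r}"
  defines "M \<equiv> gen_monoid
      ({of_nat k / of_nat r | k. k \<in> A} \<union>
       {of_nat k' / of_nat r * (of_nat s / of_nat r) ^ n | k' n. k' \<in> B \<and> n \<ge> 1} :: rat set)"
  defines "D \<equiv> {x \<in> M. \<exists>n\<ge>1. leG M x ((of_nat s / of_nat r) ^ n)}"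
  shows "(\<forall>t. 1 \<le> t \<and> t \<le> r - 1 \<longrightarrow> int_mult M t D \<noteq> M) \<and> int_mult M r D = M"
proof -
  define u where "u = (\<lambda>n. (of_nat s / of_nat r :: rat)^n)"
  have r0: "r > 0" using assms(6) by simp
  have sr: "r < s" using assms(7) by simp
  have cop: "coprime r s" using assms(8) by (simp add: coprime_iff_gcd_eq_1)
  have sA: "s \<in> A" using assms(4) A_def by simp
  have rB: "r \<in> B" and srB: "s - r \<in> B" by (auto simp: B_def intro: gen_monoid.gen)
  have B0: "0 \<in> B" by (simp add: B_def gen_monoid.zero)
  have Badd: "\<And>x y. x \<in> B \<Longrightarrow> y \<in> B \<Longrightarrow> x + y \<in> B" unfolding B_def by (rule gen_monoid.add)
  have M0: "0 \<in> M" unfolding M_def by (rule gen_monoid.zero)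
  have Madd: "\<And>x y. x \<in> M \<Longrightarrow> y \<in> M \<Longrightarrow> x + y \<in> M" unfolding M_def by (rule gen_monoid.add)
  have Mmult: "\<And>k x. x \<in> M \<Longrightarrow> of_nat k * x \<in> M" unfolding M_def by (rule gm_mult)
  have genA: "\<And>k. k \<in> A \<Longrightarrow> of_nat k / of_nat r \<in> M" unfolding M_def by (rule gen_monoid.gen) blast
  have genB: "\<And>k n. k \<in> B \<Longrightarrow> n \<ge> 1 \<Longrightarrow> of_nat k / of_nat r * u n \<in> M"
    unfolding M_def u_def by (rule gen_monoid.gen) blast
  have uM: "\<And>n. n \<ge> 1 \<Longrightarrow> u n \<in> M" using genB[OF rB] r0 by simp
  have ustep: "\<And>n. n \<ge> 1 \<Longrightarrow> u (Suc n) - u n \<in> M"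
  proof -
    fix n :: nat assume n1: "n \<ge> 1"
    have "u (Suc n) - u n = of_nat (s - r) / of_nat r * u n" using r0 sr by (simp add: u_def of_nat_diff field_simps)
    then show "u (Suc n) - u n \<in> M" using genB[OF srB n1] by simp
  qed
  have umono: "\<And>n m. 1 \<le> n \<Longrightarrow> n \<le> m \<Longrightarrow> u m - u n \<in> M"
  proof -
    fix n m :: nat assume n1: "1 \<le> n" and nm: "n \<le> m"
    from nm show "u m - u n \<in> M"
    proof (induction m rule: dec_induct)
      case base then show ?case using M0 by simp
    next
      case (step k)
      have "u (Suc k) - u n = (u (Suc k) - u k) + (u k - u n)" by simp
      moreover have "u (Suc k) - u k \<in> M" using ustep n1 step.hyps by simp
      ultimately show ?case using Madd step.IH by metis
    qed
  qed
  have D': "D = {x \<in> M. \<exists>n\<ge>1. leG M x (u n)}" using D_def u_def by simp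
  have I: "\<And>m. int_mult M (Suc m) D = {z \<in> M. \<exists>n\<ge>1. of_nat (Suc m) * u n - z \<in> M}"
    by (rule intI[OF uM umono M0 Madd Mmult D'])
  have bound: "\<And>z. z \<in> M \<Longrightarrow> \<exists>k n. n \<ge> 1 \<and> of_nat k * u n - z \<in> M"
  proof -
    fix z assume "z \<in> M"
    then have "z \<in> gen_monoid ({of_nat k / of_nat r | k. k \<in> A} \<union>
       {of_nat k' / of_nat r * (of_nat s / of_nat r) ^ n | k' n. k' \<in> B \<and> n \<ge> 1} :: rat set)"
      by (simp add: M_def)
    then show "\<exists>k n. n \<ge> 1 \<and> of_nat k * u n - z \<in> M"
    proof induction
      case zero
      show ?case using M0 by (intro exI[of _ 0] exI[of _ 1]) simp
    next
      case (gen x)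
      then show ?case
      proof
        assume "x \<in> {of_nat k / of_nat r | k. k \<in> A}"
        then obtain a where x: "x = of_nat a / of_nat r" and a: "a \<in> A" by blast
        have "(s - 1) * a \<in> A" using a unfolding A_def by (rule gm_nat_mult)
        then have "of_nat ((s - 1) * a) / of_nat r \<in> M" by (rule genA)
        moreover have "of_nat a * u 1 - x = of_nat ((s - 1) * a) / of_nat r"
          using x sr r0 by (simp add: u_def of_nat_diff field_simps)
        ultimately show ?case by (intro exI[of _ a] exI[of _ 1]) simp
      next
        assume "x \<in> {of_nat k' / of_nat r * (of_nat s / of_nat r) ^ n | k' n. k' \<in> B \<and> n \<ge> 1}"
        then obtain b n where x: "x = of_nat b / of_nat r * u n" and b: "b \<in> B" "n \<ge> 1"
          unfolding u_def by blast
        have "(r - 1) * b \<in> B" using b(1) unfolding B_def by (rule gm_nat_mult)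
        then have "of_nat ((r - 1) * b) / of_nat r * u n \<in> M" using b(2) by (rule genB)
        moreover have "of_nat b * u n - x = of_nat ((r - 1) * b) / of_nat r * u n"
          using x r0 by (simp add: of_nat_diff field_simps)
        ultimately show ?case using b(2) by (intro exI[of _ b] exI[of _ n]) simp
      qed
    next
      case (add x y)
      from add.IH obtain k1 n1 k2 n2 where h: "n1 \<ge> 1" "of_nat k1 * u n1 - x \<in> M" "n2 \<ge> 1" "of_nat k2 * u n2 - y \<in> M"
        by blast
      define n where "n = max n1 n2"
      have a1: "of_nat k1 * (u n - u n1) \<in> M" using Mmult umono h unfolding n_def by simp
      have a2: "of_nat k2 * (u n - u n2) \<in> M" using Mmult umono h unfolding n_def by simp
      have "of_nat k1 * (u n - u n1) + (of_nat k1 * u n1 - x) + of_nat k2 * (u n - u n2) + (of_nat k2 * u n2 - y) \<in> M"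
        using a1 a2 h by (meson Madd)
      moreover have "of_nat k1 * (u n - u n1) + (of_nat k1 * u n1 - x) + of_nat k2 * (u n - u n2) + (of_nat k2 * u n2 - y)
          = of_nat (k1 + k2) * u n - (x + y)" by (simp add: algebra_simps)
      ultimately have "of_nat (k1 + k2) * u n - (x + y) \<in> M" by metis
      moreover have "n \<ge> 1" using h unfolding n_def by simp
      ultimately show ?case by blast
    qed
  qed
  have rstep: "\<And>n j. n \<ge> 1 \<Longrightarrow> of_nat r * u (n + j) - of_nat (r + j * (s - r)) * u n \<in> M"
  proof -
    fix n j :: nat assume n1: "n \<ge> 1"
    show "of_nat r * u (n + j) - of_nat (r + j * (s - r)) * u n \<in> M"
    proof (induction j)
      case 0 then show ?case using M0 by simp
    next
      case (Suc j)
      have e: "of_nat r * u (Suc (n + j)) = of_nat r * u (n + j) + of_nat (s - r) * u (n + j)"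
        using r0 sr by (simp add: u_def of_nat_diff field_simps)
      have "of_nat (s - r) * (u (n + j) - u n) \<in> M" using Mmult umono n1 by simp
      moreover have "of_nat r * u (n + Suc j) - of_nat (r + Suc j * (s - r)) * u n
        = (of_nat r * u (n + j) - of_nat (r + j * (s - r)) * u n) + of_nat (s - r) * (u (n + j) - u n)"
        using e unfolding of_nat_add of_nat_mult of_nat_Suc by (simp add: algebra_simps)
      ultimately show ?case using Suc.IH Madd by metis
    qed
  qed
  have pos: "\<And>z. z \<in> M \<Longrightarrow> \<exists>n\<ge>1. of_nat r * u n - z \<in> M"
  proof -
    fix z assume "z \<in> M"
    then obtain k n where kn: "n \<ge> 1" "of_nat k * u n - z \<in> M" using bound by blast
    have "k * 1 \<le> k * (s - r)" using sr by (intro mult_le_mono2) simp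
    then have kk: "k \<le> r + k * (s - r)" by (metis mult.right_neutral trans_le_add2)
    have "of_nat (r + k * (s - r) - k) * u n \<in> M" using Mmult uM kn by simp
    moreover have "of_nat r * u (n + k) - z = (of_nat r * u (n + k) - of_nat (r + k * (s - r)) * u n)
        + of_nat (r + k * (s - r) - k) * u n + (of_nat k * u n - z)"
      using kk by (simp add: of_nat_diff algebra_simps)
    ultimately have "of_nat r * u (n + k) - z \<in> M" using rstep[OF kn(1), of k] kn(2) Madd by metis
    then show "\<exists>n\<ge>1. of_nat r * u n - z \<in> M" using kn(1) by (intro exI[of _ "n + k"]) simp
  qed
  show ?thesis
  proof
    show "\<forall>t. 1 \<le> t \<and> t \<le> r - 1 \<longrightarrow> int_mult M t D \<noteq> M"
    proof (intro allI impI)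
      fix t assume t: "1 \<le> t \<and> t \<le> r - 1"
      then obtain m where tm: "t = Suc m" by (cases t) auto
      have "r * s \<in> A" using sA unfolding A_def by (rule gm_nat_mult)
      then have "of_nat (r * s) / of_nat r \<in> M" by (rule genA)
      then have sM: "of_nat s \<in> M" using r0 by simp
      have "of_nat s \<notin> int_mult M t D"
      proof
        assume "of_nat s \<in> int_mult M t D"
        then obtain n where n: "n \<ge> 1" "of_nat t * u n - of_nat s \<in> M" using I tm by auto
        then have "of_nat t * u n - of_nat s \<in> gen_monoid ({of_nat k / of_nat r | k. k \<in> A} \<union>
           {of_nat k' / of_nat r * (of_nat s / of_nat r) ^ n | k' n. k' \<in> B \<and> n \<ge> 1} :: rat set)"
          by (simp add: M_def)
        from rep[OF this r0 B0 Badd] obtain d N where dN: "\<forall>k\<ge>1. d k \<in> B"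
          "of_nat r * (of_nat t * u n - of_nat s) = (\<Sum>k<N. of_nat (d k) * (of_nat s / of_nat r :: rat)^k)"
          by blast
        have "(\<Sum>k<N. of_nat (d k) * (of_nat s / of_nat r :: rat)^k) =
           of_nat r * of_int (int t) * (of_nat s / of_nat r)^n - of_nat r * of_nat s"
          using dN(2) by (simp add: u_def algebra_simps)
        moreover have "int t < int r" using t r0 by linarith
        ultimately show False
          using descent[OF assms(6) assms(7) cop n(1), of d "int t" N] dN(1) unfolding B_def by blast
      qed
      then show "int_mult M t D \<noteq> M" using sM by blast
    qed
  next
    obtain m where rm: "r = Suc m" using r0 by (cases r) auto
    show "int_mult M r D = M" unfolding rm I using pos rm by auto
  qed
qed

end
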